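(* Assume the hypotheses of the one-step error recursion hold, and let $\Upsilon_C>0$, $\rho\in(0,1)$ be constants such that for every $i\in[1,T]$ with $(\tilde z_i^0,\tilde\lambda_i^0)\in\mathcal N_\epsilon(\tilde z_i^\star,\tilde\lambda_i^\star)$ the recursion $$\Psi^1_{k,i}\le\Upsilon_C\Big(\sum_{j=n_1(i)}^{n_2(i)}\rho^{|k-j|}(\Psi^0_{j,i})^2+\rho^{k-n_1(i)}\|x^0_{n_1(i),i}-x^\star_{n_1(i)}\|+\rho^{n_2(i)-k}\epsilon\Big),\quad k\in[n_1(i),n_2(i)],$$ holds. Suppose $L$ and $\epsilon$ satisfy $$\rho^L\le\epsilon\le\frac{1-\rho}{16\Upsilon_C(1+\rho)}.$$ Then for every $i\in[1,T-1]$: if $(\tilde z_i^0,\tilde\lambda_i^0)\in\mathcal N_\epsilon(\tilde z_i^\star,\tilde\lambda_i^\star)$, then $(\tilde z_{i+1}^0,\tilde\lambda_{i+1}^0)\in\mathcal N_\epsilon(\tilde z_{i+1}^\star,\tilde\lambda_{i+1}^\star)$.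
   Context: Notation: $[k]=\{0,1,\dots,k\}$; for integers $k_1<k_2$, $[k_1,k_2]$, $[k_1,k_2)$, $(k_1,k_2]$ denote the corresponding sets of integers; $a\vee b=\max(a,b)$, $a\wedge b=\min(a,b)$. Full-horizon problem $\mathcal P_{0:N}(d)$: minimize $\sum_{k=0}^{N-1}g_k(x_k,u_k;d_k)+g_N(x_N)$ over $x_k\in\mathbb R^{n_x}$, $u_k\in\mathbb R^{n_u}$ subject to $x_{k+1}=f_k(x_k,u_k;d_k)$, $k\in[N-1]$, $x_0=\bar x_0$; $g_k,f_k,g_N$ twice continuously differentiable. Write $z_k=(x_k;u_k)$ ($k<N$), $z_N=x_N$, multipliers $\lambda=(\lambda_{-1};\dots;\lambda_{N-1})$, stage Lagrangians $\mathcal L_k=g_k(z_k;d_k)+\lambda_{k-1}^Tx_k-\lambda_k^Tf_k(z_k;d_k)$. $(z^\star,\lambda^\star)$ is a fixed KKT solution of $\mathcal P_{0:N}(d)$. "The hypotheses of the one-step error recursion" are: (a) Uniform SOSC in the $M$-neighborhood: reduced Hessian of the full problem $\succeq\gamma_H I$ at every point agreeing with $(z^\star,\lambda^\star)$ outside a window of $M+1$ consecutive stages and within $\epsilon$ (componentwise in $x_k,u_k,\lambda_k$) inside it; (b) controllability: for each $k\in[N-t]$ some $t_k\in[1,t]$ with $\Xi_{k,t_k}\Xi_{k,t_k}^T\succeq\gamma_C I$ at all points within $\epsilon$ of $z^\star$, where $\Xi_{k,s}=(B_{k+s-1},A_{k+s-1}B_{k+s-2},\dots,A_{k+s-1}\cdots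 A_{k+1}B_k)$, $A_k,B_k$ the Jacobians of $f_k$; (c) $\|A_k\|,\|B_k\|,\|H_k\|,\|\nabla^2 g_N\|\le\Upsilon$ (with $\Upsilon\ge2+\sqrt2$) within $\epsilon$ of the solution, $H_k$ the Hessian of $\mathcal L_k$ in $(x_k,u_k)$; (d) $H_k$ and $\nabla f_k$ are $\Upsilon_L$-Lipschitz within $\epsilon$ of the solution; (e) $\mu\ge16\Upsilon(\Upsilon^{6t}-\Upsilon^{4t})/\gamma_C^2$. All constants are independent of $N$. Receding horizons: integers $L\ge1$, $M=SL$ with $S>2$ an integer, $N\ge M$; $T=\lceil(N-M)/L\rceil+1$; $n_1(i)=(i-1)L$, $n_2(i)=(n_1(i)+M)\wedge N$ for $i\in[1,T]$. A fixed guess $(z^0,\lambda^0)$ with $\|x_k^0-x_k^\star\|\vee\|u_k^0-u_k^\star\|\vee\|\lambda_k^0-\lambda_k^\star\|\le\epsilon$ for all $k$ and $x_0^0=\bar x_0$ is given. Subproblem $i$: minimize over $x_{n_1(i):n_2(i)},u_{n_1(i):n_2(i)-1}$ the cost $\sum_{k=n_1(i)}^{n_2(i)-1}g_k(z_k;d_k)+\Phi_i(x_{n_2(i)})$ subject to $x_{k+1}=f_k(z_k;d_k)$, $k\in[n_1(i),n_2(i)-1]$, $x_{n_1(i)}=\bar x_{n_1(i)}$, where for $i<T$, $\Phi_i(x)=g_{n_2(i)}(x,u^0_{n_2(i)};d_{n_2(i)})-(\lambda^0_{n_2(i)})^Tf_{n_2(i)}(x,u^0_{n_2(i)};d_{n_2(i)})+\frac\mu2\|x-x^0_{n_2(i)}\|^2$,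 and $\Phi_T=g_N$. Its Lagrangian is $\mathcal L^i=\sum_{k=n_1(i)}^{n_2(i)-1}\mathcal L_k+\Phi_i(x_{n_2(i)})+\lambda_{n_2(i)-1}^Tx_{n_2(i)}-\lambda_{n_1(i)-1}^T\bar x_{n_1(i)}$ in $\tilde z_i=(z_{n_1(i)};\dots;z_{n_2(i)-1};x_{n_2(i)})$, $\tilde\lambda_i=\lambda_{n_1(i)-1:n_2(i)-1}$, with KKT matrix $K^i$. Truncated solution $\tilde z_i^\star=(z^\star_{n_1(i):n_2(i)-1};x^\star_{n_2(i)})$, $\tilde\lambda_i^\star=\lambda^\star_{n_1(i)-1:n_2(i)-1}$; $(\tilde z_i,\tilde\lambda_i)\in\mathcal N_\epsilon(\tilde z_i^\star,\tilde\lambda_i^\star)$ means $\|x_k-x_k^\star\|\vee\|u_k-u_k^\star\|\vee\|\lambda_k-\lambda_k^\star\|\le\epsilon$ for $k\in[n_1(i),n_2(i)-1]$ and $\|x_{n_2(i)}-x^\star_{n_2(i)}\|\le\epsilon$. Algorithm 1 (one Newton step per horizon): iterates $(z^0_{k,i},\lambda^0_{k,i})$ (input to subproblem $i$) and $(z^1_{k,i},\lambda^1_{k,i})$ (output), with $z_{n_2(i),i}=x_{n_2(i),i}$. For $i=1$: $z^0_{k,1}=z^0_k$ for $k\in[0,M-1]$, $x^0_{M,1}=x^0_M$, $\lambda^0_{k,1}=\lambda^0_k$ for $k\in[-1,M-1]$. For $i\ge2$: $\bar x_{n_1(i)}=x^1_{n_1(i),i-1}$; $(z^0_{k,i},\lambda^0_{k,i})=(z^1_{k,i-1},\lambda^1_{k,i-1})$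 for $k\in[n_1(i),n_2(i)-2L]$; $(z^0_{k,i},\lambda^0_{k,i})=(z^0_k,\lambda^0_k)$ for $k\in(n_2(i)-2L,n_2(i)-1]$; $x^0_{n_2(i),i}=x^0_{n_2(i)}$; $\lambda^0_{n_1(i)-1,i}=\lambda^1_{n_1(i)-1,i-1}$. Then $(\tilde z_i^1,\tilde\lambda_i^1)=(\tilde z_i^0,\tilde\lambda_i^0)+\Delta$ with $K^i(\tilde z_i^0,\tilde\lambda_i^0;\tilde d_i)\Delta=-\nabla\mathcal L^i(\tilde z_i^0,\tilde\lambda_i^0;\tilde d_i)$. Note $x^0_{n_1(i),i}=\bar x_{n_1(i)}$. Errors: $\Psi^{\mathrm{Id}}_{k,i}=\|(z^{\mathrm{Id}}_{k,i}-z^\star_k;\lambda^{\mathrm{Id}}_{k,i}-\lambda^\star_k)\|$ for $k\in[n_1(i),n_2(i)-1]$ and $\Psi^{\mathrm{Id}}_{n_2(i),i}=\|x^{\mathrm{Id}}_{n_2(i),i}-x^\star_{n_2(i)}\|$, $\mathrm{Id}\in\{0,1\}$. *)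

theory Defs
  imports "HOL-Analysis.Analysis"
begin

definition n1 :: "nat \<Rightarrow> nat \<Rightarrow> nat" where
  "n1 L i = (i - 1) * L"

definition n2 :: "nat \<Rightarrow> nat \<Rightarrow> nat \<Rightarrow> nat \<Rightarrow> nat" where
  "n2 L M N i = min (n1 L i + M) N"

definition Thor :: "nat \<Rightarrow> nat \<Rightarrow> nat \<Rightarrow> nat" where
  "Thor L M N = nat \<lceil>(real N - real M) / real L\<rceil> + 1"

text \<open>Multipliers are indexed by integers (lambda_{-1} exists).\<close>

definition in_Neps ::
  "nat \<Rightarrow> nat \<Rightarrow> real \<Rightarrow> (nat \<Rightarrow> real^'nx) \<Rightarrow> (nat \<Rightarrow> real^'nu) \<Rightarrow> (int \<Rightarrow> real^'nx)
   \<Rightarrow> (nat \<Rightarrow> real^'nx) \<Rightarrow> (nat \<Rightarrow> real^'nu) \<Rightarrow> (int \<Rightarrow> real^'nx) \<Rightarrow> bool" where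
  "in_Neps a b \<epsilon> x u l xs us ls \<longleftrightarrow>
     (\<forall>k. a \<le> k \<and> k < b \<longrightarrow>
        norm (x k - xs k) \<le> \<epsilon> \<and> norm (u k - us k) \<le> \<epsilon> \<and> norm (l (int k) - ls (int k)) \<le> \<epsilon>)
     \<and> norm (x b - xs b) \<le> \<epsilon>"

text \<open>Error Psi_k on the window [a,b]: Euclidean norm of the stacked vector
  (x_k - x*_k; u_k - u*_k; lambda_k - lambda*_k) for k < b, and norm (x_b - x*_b) for k = b.\<close>

definition Psi ::
  "nat \<Rightarrow> (nat \<Rightarrow> real^'nx) \<Rightarrow> (nat \<Rightarrow> real^'nu) \<Rightarrow> (int \<Rightarrow> real^'nx)
   \<Rightarrow> (nat \<Rightarrow> real^'nx) \<Rightarrow> (nat \<Rightarrow> real^'nu) \<Rightarrow> (int \<Rightarrow> real^'nx) \<Rightarrow> nat \<Rightarrow> real" where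
  "Psi b x u l xs us ls k =
     (if k < b then sqrt ((norm (x k - xs k))\<^sup>2 + (norm (u k - us k))\<^sup>2 + (norm (l (int k) - ls (int k)))\<^sup>2)
      else norm (x b - xs b))"

end

theory Submission
  imports Defs
begin

lemma geo_bound:
  fixes \<rho> :: real
  assumes r0: "0 \<le> \<rho>" and r1: "\<rho> < 1"
  shows "(\<Sum>j = a..b. \<rho> ^ (nat \<bar>int k - int j\<bar>)) \<le> 2 / (1 - \<rho>)"
proof -
  define f where "f j = \<rho> ^ (nat \<bar>int k - int j\<bar>)" for j
  have fnn: "\<And>j. 0 \<le> f j" using r0 by (simp add: f_def)
  have gp: "(\<Sum>m=0..n. \<rho> ^ m) \<le> 1 / (1 - \<rho>)" for n
  proof -
    have "(\<Sum>m=0..n. \<rho> ^ m) = (\<Sum>m<Suc n. \<rho> ^ m)"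
      by (simp add: atLeast0AtMost lessThan_Suc_atMost)
    also have "\<dots> = (1 - \<rho> ^ Suc n) / (1 - \<rho>)" using sum_gp_strict[of \<rho> "Suc n"] r1 by (simp del: sum.lessThan_Suc power_Suc)
    also have "\<dots> \<le> 1 / (1 - \<rho>)" using r0 r1 by (simp add: divide_right_mono)
    finally show ?thesis .
  qed
  have s1: "(\<Sum>j=0..k. f j) \<le> 1 / (1 - \<rho>)"
  proof -
    have "(\<Sum>j=0..k. f j) = (\<Sum>j=0..k. f (k + 0 - j))" by (rule sum.atLeastAtMost_rev)
    also have "\<dots> = (\<Sum>j=0..k. \<rho> ^ j)" by (rule sum.cong) (auto simp: f_def)
    finally show ?thesis using gp by simp
  qed
  have s2: "(\<Sum>j=k..b. f j) \<le> 1 / (1 - \<rho>)"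
  proof (cases "k \<le> b")
    case True
    have "(\<Sum>j=k..b. f j) = (\<Sum>j=0..b-k. f (k + j))"
      using sum.atLeastAtMost_shift_0[OF True] by (simp add: comp_def)
    also have "\<dots> = (\<Sum>j=0..b-k. \<rho> ^ j)" by (rule sum.cong) (auto simp: f_def)
    finally show ?thesis using gp by simp
  next
    case False then show ?thesis using r1 by simp
  qed
  have "(\<Sum>j=a..b. f j) \<le> (\<Sum>j\<in>{0..k} \<union> {k..b}. f j)"
    by (rule sum_mono2) (auto simp: fnn)
  also have "\<dots> \<le> (\<Sum>j=0..k. f j) + (\<Sum>j=k..b. f j)"
    using sum.union_inter[of "{0..k}" "{k..b}" f] sum_nonneg[of "{0..k} \<inter> {k..b}" f] fnn by simp
  also have "\<dots> \<le> 2 / (1 - \<rho>)" using s1 s2 by simp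
  finally show ?thesis by (simp add: f_def)
qed

theorem theorem3:
  fixes L S M N :: nat
    and \<epsilon> \<rho> UpsC :: real
    and xs xg :: "nat \<Rightarrow> real^'nx" and us ug :: "nat \<Rightarrow> real^'nu" and ls lg :: "int \<Rightarrow> real^'nx"
    and x0 x1 :: "nat \<Rightarrow> nat \<Rightarrow> real^'nx" and u0 u1 :: "nat \<Rightarrow> nat \<Rightarrow> real^'nu"
    and l0 l1 :: "nat \<Rightarrow> int \<Rightarrow> real^'nx"
    and xbar0 :: "real^'nx"
  assumes L_pos: "L \<ge> 1" and S_gt: "S > 2" and M_def: "M = S * L" and N_ge: "N \<ge> M"
    and UpsC_pos: "UpsC > 0" and rho_pos: "0 < \<rho>" and rho_lt: "\<rho> < 1"
    and eps_lo: "\<rho> ^ L \<le> \<epsilon>"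
    and eps_hi: "\<epsilon> \<le> (1 - \<rho>) / (16 * UpsC * (1 + \<rho>))"
    \<comment> \<open>initial guess\<close>
    and guess_x: "\<And>k. k \<le> N \<Longrightarrow> norm (xg k - xs k) \<le> \<epsilon>"
    and guess_u: "\<And>k. k < N \<Longrightarrow> norm (ug k - us k) \<le> \<epsilon>"
    and guess_l: "\<And>k. -1 \<le> k \<Longrightarrow> k < int N \<Longrightarrow> norm (lg k - ls k) \<le> \<epsilon>"
    and guess_x0: "xg 0 = xbar0"
    \<comment> \<open>Algorithm 1, initialisation of horizon 1\<close>
    and init1_x: "\<And>k. k \<le> M \<Longrightarrow> x0 1 k = xg k"
    and init1_u: "\<And>k. k < M \<Longrightarrow> u0 1 k = ug k"
    and init1_l: "\<And>k. -1 \<le> k \<Longrightarrow> k < int M \<Longrightarrow> l0 1 k = lg k"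
    \<comment> \<open>Algorithm 1, warm start of horizon i >= 2\<close>
    and warm_bar: "\<And>i. 2 \<le> i \<Longrightarrow> i \<le> Thor L M N \<Longrightarrow> x0 i (n1 L i) = x1 (i - 1) (n1 L i)"
    and warm_shift: "\<And>i k. 2 \<le> i \<Longrightarrow> i \<le> Thor L M N \<Longrightarrow> n1 L i \<le> k \<Longrightarrow> k + 2 * L \<le> n2 L M N i \<Longrightarrow>
        x0 i k = x1 (i - 1) k \<and> u0 i k = u1 (i - 1) k \<and> l0 i (int k) = l1 (i - 1) (int k)"
    and warm_guess: "\<And>i k. 2 \<le> i \<Longrightarrow> i \<le> Thor L M N \<Longrightarrow> n2 L M N i < k + 2 * L \<Longrightarrow> k < n2 L M N i \<Longrightarrow>
        x0 i k = xg k \<and> u0 i k = ug k \<and> l0 i (int k) = lg (int k)"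
    and warm_term: "\<And>i. 2 \<le> i \<Longrightarrow> i \<le> Thor L M N \<Longrightarrow> x0 i (n2 L M N i) = xg (n2 L M N i)"
    and warm_mult: "\<And>i. 2 \<le> i \<Longrightarrow> i \<le> Thor L M N \<Longrightarrow>
        l0 i (int (n1 L i) - 1) = l1 (i - 1) (int (n1 L i) - 1)"
    \<comment> \<open>the one-step error recursion\<close>
    and recursion: "\<And>i k. 1 \<le> i \<Longrightarrow> i \<le> Thor L M N \<Longrightarrow>
        in_Neps (n1 L i) (n2 L M N i) \<epsilon> (x0 i) (u0 i) (l0 i) xs us ls \<Longrightarrow>
        n1 L i \<le> k \<Longrightarrow> k \<le> n2 L M N i \<Longrightarrow>
        Psi (n2 L M N i) (x1 i) (u1 i) (l1 i) xs us ls k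
          \<le> UpsC * ((\<Sum>j = n1 L i..n2 L M N i.
                        \<rho> ^ (nat \<bar>int k - int j\<bar>) * (Psi (n2 L M N i) (x0 i) (u0 i) (l0 i) xs us ls j)\<^sup>2)
                     + \<rho> ^ (k - n1 L i) * norm (x0 i (n1 L i) - xs (n1 L i))
                     + \<rho> ^ (n2 L M N i - k) * \<epsilon>)"
  shows "\<forall>i. 1 \<le> i \<and> i \<le> Thor L M N - 1 \<longrightarrow>
           in_Neps (n1 L i) (n2 L M N i) \<epsilon> (x0 i) (u0 i) (l0 i) xs us ls \<longrightarrow>
           in_Neps (n1 L (i + 1)) (n2 L M N (i + 1)) \<epsilon> (x0 (i + 1)) (u0 (i + 1)) (l0 (i + 1)) xs us ls"
proof (intro allI impI)
  fix i assume hi: "1 \<le> i \<and> i \<le> Thor L M N - 1"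
    and Ni: "in_Neps (n1 L i) (n2 L M N i) \<epsilon> (x0 i) (u0 i) (l0 i) xs us ls"
  define a where "a = n1 L i"
  define b where "b = n2 L M N i"
  define a' where "a' = n1 L (i+1)"
  define b' where "b' = n2 L M N (i+1)"
  have i1: "1 \<le> i" and iT: "i \<le> Thor L M N - 1" using hi by auto
  have eps_pos: "0 < \<epsilon>" using eps_lo zero_less_power[OF rho_pos, of L] by linarith
  have a'_eq: "a' = a + L" unfolding a'_def a_def n1_def using i1
    by (metis add_diff_cancel_left' le_add_diff_inverse mult_Suc plus_1_eq_Suc add.commute)
  have aMN: "a + M < N"
  proof -
    have "int (i - 1) < \<lceil>(real N - real M) / real L\<rceil>"
      using iT i1 unfolding Thor_def by linarith
    then have "real (i - 1) < (real N - real M) / real L"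
      by (simp add: less_ceiling_iff)
    then have "real (i - 1) * real L < real N - real M"
      using L_pos by (simp add: pos_less_divide_eq)
    then have "real ((i - 1) * L + M) < real N" by simp
    then show ?thesis unfolding a_def n1_def by linarith
  qed
  have b_eq: "b = a + M" unfolding b_def n2_def a_def[symmetric] using aMN by simp
  have b'_eq: "b' = min (a + L + M) N" unfolding b'_def n2_def a'_def[symmetric] a'_eq by simp
  have hML: "M \<ge> 3 * L" using M_def S_gt by simp
  have b'_ge: "a' + 2 * L \<le> b'" using b'_eq a'_eq aMN hML by simp
  have b'_le: "b' \<le> b + L" "b' \<le> N" using b'_eq b_eq by auto
  have i1T: "2 \<le> i + 1" "i + 1 \<le> Thor L M N" using hi by auto
  have ab: "a < b" using b_eq hML L_pos by simp
  have Ni': "\<And>k. a \<le> k \<Longrightarrow> k < b \<Longrightarrow> norm (x0 i k - xs k) \<le> \<epsilon> \<and> norm (u0 i k - us k) \<le> \<epsilon>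
      \<and> norm (l0 i (int k) - ls (int k)) \<le> \<epsilon>" "norm (x0 i b - xs b) \<le> \<epsilon>"
    using Ni unfolding in_Neps_def a_def b_def by auto
  have Psi0: "(Psi b (x0 i) (u0 i) (l0 i) xs us ls j)\<^sup>2 \<le> 3 * \<epsilon>\<^sup>2" if "a \<le> j" "j \<le> b" for j
  proof (cases "j < b")
    case True
    from Ni'(1)[OF that(1) True] have h: "norm (x0 i j - xs j) \<le> \<epsilon>" "norm (u0 i j - us j) \<le> \<epsilon>"
      "norm (l0 i (int j) - ls (int j)) \<le> \<epsilon>" by auto
    have "(norm (x0 i j - xs j))\<^sup>2 \<le> \<epsilon>\<^sup>2" "(norm (u0 i j - us j))\<^sup>2 \<le> \<epsilon>\<^sup>2"
      "(norm (l0 i (int j) - ls (int j)))\<^sup>2 \<le> \<epsilon>\<^sup>2"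
      using h by (auto intro: power_mono)
    then show ?thesis using True by (simp add: Psi_def)
  next
    case False
    have h: "(norm (x0 i b - xs b))\<^sup>2 \<le> \<epsilon>\<^sup>2" using Ni'(2) by (auto intro: power_mono)
    have "Psi b (x0 i) (u0 i) (l0 i) xs us ls j = norm (x0 i b - xs b)" using False by (simp add: Psi_def)
    moreover have "\<epsilon>\<^sup>2 \<le> 3 * \<epsilon>\<^sup>2" by simp
    ultimately show ?thesis using h by (metis order_trans)
  qed
  have rL: "\<rho> ^ m \<le> \<epsilon>" if "L \<le> m" for m
    using power_decreasing[OF that, of \<rho>] rho_pos rho_lt eps_lo by (meson less_eq_real_def order_trans)
  have Ueps: "UpsC * \<epsilon> * 8 / (1 - \<rho>) \<le> 1"
  proof -
    have "UpsC * \<epsilon> \<le> (1 - \<rho>) / (16 * (1 + \<rho>))"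
    proof -
      have "UpsC * \<epsilon> \<le> UpsC * ((1 - \<rho>) / (16 * UpsC * (1 + \<rho>)))"
        using eps_hi UpsC_pos by (intro mult_left_mono) auto
      also have "\<dots> = (1 - \<rho>) / (16 * (1 + \<rho>))" using UpsC_pos by simp
      finally show ?thesis .
    qed
    also have "\<dots> \<le> (1 - \<rho>) / 16" using rho_pos rho_lt by (intro divide_left_mono) auto
    finally show ?thesis using rho_lt by (simp add: field_simps)
  qed
  have Psi1: "Psi b (x1 i) (u1 i) (l1 i) xs us ls k \<le> \<epsilon>" if "a + L \<le> k" "k + L \<le> b" for k
  proof -
    have rec: "Psi b (x1 i) (u1 i) (l1 i) xs us ls k
          \<le> UpsC * ((\<Sum>j = a..b. \<rho> ^ (nat \<bar>int k - int j\<bar>) * (Psi b (x0 i) (u0 i) (l0 i) xs us ls j)\<^sup>2)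
                     + \<rho> ^ (k - a) * norm (x0 i a - xs a) + \<rho> ^ (b - k) * \<epsilon>)"
      using recursion[OF i1 _ Ni] that iT unfolding a_def b_def by auto
    have "(\<Sum>j = a..b. \<rho> ^ (nat \<bar>int k - int j\<bar>) * (Psi b (x0 i) (u0 i) (l0 i) xs us ls j)\<^sup>2)
        \<le> (\<Sum>j = a..b. \<rho> ^ (nat \<bar>int k - int j\<bar>) * (3 * \<epsilon>\<^sup>2))"
      by (rule sum_mono) (use Psi0 rho_pos in \<open>auto intro: mult_left_mono\<close>)
    also have "\<dots> = 3 * \<epsilon>\<^sup>2 * (\<Sum>j = a..b. \<rho> ^ (nat \<bar>int k - int j\<bar>))"
      by (simp add: sum_distrib_left mult.commute)
    also have "\<dots> \<le> 3 * \<epsilon>\<^sup>2 * (2 / (1 - \<rho>))"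
      using geo_bound[of \<rho> k a b] rho_pos rho_lt by (intro mult_left_mono) auto
    finally have S: "(\<Sum>j = a..b. \<rho> ^ (nat \<bar>int k - int j\<bar>) * (Psi b (x0 i) (u0 i) (l0 i) xs us ls j)\<^sup>2)
        \<le> 6 * \<epsilon>\<^sup>2 / (1 - \<rho>)" by simp
    have T2: "\<rho> ^ (k - a) * norm (x0 i a - xs a) \<le> \<epsilon> * \<epsilon>"
      using rL[of "k - a"] that Ni'(1)[OF le_refl ab] eps_pos by (intro mult_mono) auto
    have T3: "\<rho> ^ (b - k) * \<epsilon> \<le> \<epsilon> * \<epsilon>"
      using rL[of "b - k"] that eps_pos by (intro mult_right_mono) auto
    have two: "2 * \<epsilon>\<^sup>2 \<le> 2 * \<epsilon>\<^sup>2 / (1 - \<rho>)"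
      using rho_pos rho_lt by (simp add: field_simps)
    have "Psi b (x1 i) (u1 i) (l1 i) xs us ls k \<le> UpsC * (6 * \<epsilon>\<^sup>2 / (1 - \<rho>) + \<epsilon> * \<epsilon> + \<epsilon> * \<epsilon>)"
      using rec S T2 T3 UpsC_pos by (smt (verit) mult_left_mono)
    also have "\<dots> \<le> UpsC * (8 * \<epsilon>\<^sup>2 / (1 - \<rho>))"
    proof -
      have e: "8 * \<epsilon>\<^sup>2 / (1 - \<rho>) = 6 * \<epsilon>\<^sup>2 / (1 - \<rho>) + 2 * \<epsilon>\<^sup>2 / (1 - \<rho>)"
        by (simp add: add_divide_distrib[symmetric])
      have "6 * \<epsilon>\<^sup>2 / (1 - \<rho>) + \<epsilon> * \<epsilon> + \<epsilon> * \<epsilon> \<le> 8 * \<epsilon>\<^sup>2 / (1 - \<rho>)"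
        unfolding e using two by (simp add: power2_eq_square)
      then show ?thesis using UpsC_pos by (intro mult_left_mono) auto
    qed
    also have "\<dots> = \<epsilon> * (UpsC * \<epsilon> * 8 / (1 - \<rho>))" by (simp add: power2_eq_square)
    also have "\<dots> \<le> \<epsilon>" using Ueps eps_pos using mult_left_mono[of "UpsC * \<epsilon> * 8 / (1 - \<rho>)" 1 \<epsilon>] by simp
    finally show ?thesis .
  qed
  have comp: "norm (x1 i k - xs k) \<le> \<epsilon> \<and> norm (u1 i k - us k) \<le> \<epsilon>
      \<and> norm (l1 i (int k) - ls (int k)) \<le> \<epsilon>" if "a + L \<le> k" "k + L \<le> b" for k
  proof -
    have kb: "k < b" using that L_pos by simp
    let ?p = "norm (x1 i k - xs k)" and ?q = "norm (u1 i k - us k)" and ?r = "norm (l1 i (int k) - ls (int k))"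
    have P: "sqrt (?p\<^sup>2 + ?q\<^sup>2 + ?r\<^sup>2) \<le> \<epsilon>" using Psi1[OF that] kb by (simp add: Psi_def)
    have "?p = sqrt (?p\<^sup>2)" "?q = sqrt (?q\<^sup>2)" "?r = sqrt (?r\<^sup>2)" by simp_all
    moreover have "sqrt (?p\<^sup>2) \<le> sqrt (?p\<^sup>2 + ?q\<^sup>2 + ?r\<^sup>2)" "sqrt (?q\<^sup>2) \<le> sqrt (?p\<^sup>2 + ?q\<^sup>2 + ?r\<^sup>2)"
      "sqrt (?r\<^sup>2) \<le> sqrt (?p\<^sup>2 + ?q\<^sup>2 + ?r\<^sup>2)" by (rule real_sqrt_le_mono, simp)+
    ultimately show ?thesis using P by linarith
  qed
  show "in_Neps (n1 L (i + 1)) (n2 L M N (i + 1)) \<epsilon> (x0 (i + 1)) (u0 (i + 1)) (l0 (i + 1)) xs us ls"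
    unfolding in_Neps_def a'_def[symmetric] b'_def[symmetric]
  proof (rule conjI, intro allI impI)
    fix k assume k: "a' \<le> k \<and> k < b'"
    show "norm (x0 (i + 1) k - xs k) \<le> \<epsilon> \<and> norm (u0 (i + 1) k - us k) \<le> \<epsilon>
        \<and> norm (l0 (i + 1) (int k) - ls (int k)) \<le> \<epsilon>"
    proof (cases "k + 2 * L \<le> b'")
      case True
      have "x0 (i+1) k = x1 i k \<and> u0 (i+1) k = u1 i k \<and> l0 (i+1) (int k) = l1 i (int k)"
        using warm_shift[OF i1T, of k] k True unfolding a'_def b'_def by simp
      moreover have "a + L \<le> k" "k + L \<le> b" using k True a'_eq b'_le by auto
      ultimately show ?thesis using comp by simp
    next
      case False
      have "x0 (i+1) k = xg k \<and> u0 (i+1) k = ug k \<and> l0 (i+1) (int k) = lg (int k)"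
        using warm_guess[OF i1T, of k] k False unfolding b'_def by simp
      moreover have "k < N" using k b'_le by simp
      ultimately show ?thesis using guess_x[of k] guess_u[of k] guess_l[of "int k"] by simp
    qed
  next
    show "norm (x0 (i + 1) b' - xs b') \<le> \<epsilon>"
      using warm_term[OF i1T] guess_x[of b'] b'_le unfolding b'_def by simp
  qed
qed

end
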